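(* Let $E,A,B\in\mathbb{C}^{n,n}$ pairwise commute. Then there exists a nonsingular $U\in\mathbb{C}^{n,n}$ such that $$UEU^{-1}=\mathrm{diag}(J^E,N^E_2,N^E_3,N^E_4),\quad UAU^{-1}=\mathrm{diag}(A_1,J^A,N^A_3,N^A_4),\quad UBU^{-1}=\mathrm{diag}(B_1,B_2,J^B,N^B_4),$$ with conformable square diagonal blocks, where $J^E,J^A,J^B$ are nonsingular and $N^E_2,N^E_3,N^E_4,N^A_3,N^A_4,N^B_4$ are nilpotent. Moreover, if the triple $(E,A,B)$ is regular (i.e. $\det(\lambda E-A-\omega B)$ is not identically zero), then the fourth diagonal blocks are absent (have size zero).
   Context: Blocks of size zero are allowed. *)

theory Defs
  imports "Jordan_Normal_Form.Determinant"
begin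

definition nilpotent_mat :: "'a :: semiring_1 mat \<Rightarrow> bool" where
  "nilpotent_mat N \<longleftrightarrow> square_mat N \<and> (\<exists>k. N ^\<^sub>m k = 0\<^sub>m (dim_row N) (dim_col N))"

definition block_diag2 :: "'a :: zero mat \<Rightarrow> 'a mat \<Rightarrow> 'a mat" where
  "block_diag2 X Y = four_block_mat X (0\<^sub>m (dim_row X) (dim_col Y)) (0\<^sub>m (dim_row Y) (dim_col X)) Y"

definition block_diag4 :: "'a :: zero mat \<Rightarrow> 'a mat \<Rightarrow> 'a mat \<Rightarrow> 'a mat \<Rightarrow> 'a mat" where
  "block_diag4 X1 X2 X3 X4 = block_diag2 X1 (block_diag2 X2 (block_diag2 X3 X4))"

definition regular_triple :: "complex mat \<Rightarrow> complex mat \<Rightarrow> complex mat \<Rightarrow> bool" where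
  "regular_triple E A B \<longleftrightarrow> (\<exists>l w. det (l \<cdot>\<^sub>m E - A - w \<cdot>\<^sub>m B) \<noteq> 0)"

end

theory Submission
  imports Defs "Jordan_Normal_Form.Jordan_Normal_Form_Existence"
begin

lemma bd2_carrier[simp]: "X \<in> carrier_mat a a \<Longrightarrow> Y \<in> carrier_mat b b \<Longrightarrow> block_diag2 X Y \<in> carrier_mat (a+b) (a+b)"
  unfolding block_diag2_def by auto

lemma bd2_mult: assumes "X \<in> carrier_mat a a" "X' \<in> carrier_mat a a" "Y \<in> carrier_mat b b" "Y' \<in> carrier_mat b b"
  shows "block_diag2 X Y * block_diag2 X' Y' = block_diag2 (X * X') (Y * (Y'::'a::semiring_1 mat))"
  unfolding block_diag2_def using assms
  by (subst mult_four_block_mat, auto)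

lemma bd2_one: "block_diag2 (1\<^sub>m a) (1\<^sub>m b) = (1\<^sub>m (a+b) :: 'a::semiring_1 mat)"
  unfolding block_diag2_def by (rule eq_matI, auto)

lemma bd2_pow: assumes "X \<in> carrier_mat a a" "Y \<in> carrier_mat b b"
  shows "block_diag2 X Y ^\<^sub>m k = block_diag2 (X ^\<^sub>m k) (Y ^\<^sub>m k :: 'a::semiring_1 mat)"
proof (induct k)
  case 0
  have "dim_row (block_diag2 X Y) = a + b" using bd2_carrier[OF assms] by auto
  moreover have "X ^\<^sub>m 0 = 1\<^sub>m a" "Y ^\<^sub>m 0 = 1\<^sub>m b" using assms by auto
  ultimately show ?case using bd2_one[of a b] by (metis pow_mat.simps(1))
next
  case (Suc k) then show ?case using assms by (simp add: bd2_mult[of _ a _ _ b])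
qed

lemma bd2_eq: assumes "X \<in> carrier_mat a a" "X' \<in> carrier_mat a a" "Y \<in> carrier_mat b b" "Y' \<in> carrier_mat b b"
  and "block_diag2 X Y = block_diag2 X' Y'"
  shows "X = X' \<and> Y = Y'"
proof
  show "X = X'"
  proof (rule eq_matI)
    fix i j assume ij: "i < dim_row X'" "j < dim_col X'"
    have "block_diag2 X Y $$ (i,j) = block_diag2 X' Y' $$ (i,j)" using assms(5) by simp
    then show "X $$ (i,j) = X' $$ (i,j)" using assms(1-4) ij unfolding block_diag2_def by auto
  qed (use assms in auto)
  show "Y = Y'"
  proof (rule eq_matI)
    fix i j assume ij: "i < dim_row Y'" "j < dim_col Y'"
    have "block_diag2 X Y $$ (i+a,j+a) = block_diag2 X' Y' $$ (i+a,j+a)" using assms(5) by simp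
    then show "Y $$ (i,j) = Y' $$ (i,j)" using assms(1-4) ij unfolding block_diag2_def by auto
  qed (use assms in auto)
qed

lemma bd2_smult: "k \<cdot>\<^sub>m block_diag2 X Y = block_diag2 (k \<cdot>\<^sub>m X) (k \<cdot>\<^sub>m (Y::'a::semiring_1 mat))"
  unfolding block_diag2_def by (rule eq_matI, auto)

lemma bd2_minus: assumes "X \<in> carrier_mat a a" "X' \<in> carrier_mat a a" "Y \<in> carrier_mat b b" "Y' \<in> carrier_mat b b"
  shows "block_diag2 X Y - block_diag2 X' Y' = block_diag2 (X - X') (Y - (Y'::'a::ring_1 mat))"
  unfolding block_diag2_def using assms by (intro eq_matI, auto)

lemma bd2_det: assumes "X \<in> carrier_mat a a" "Y \<in> carrier_mat b b"
  shows "det (block_diag2 X Y) = det X * det (Y::'a::idom mat)"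
  unfolding block_diag2_def using assms by (intro det_four_block_mat_lower_left_zero, auto)

lemma bd2_assoc: "block_diag2 X (block_diag2 Y Z) = block_diag2 (block_diag2 X Y) Z"
  unfolding block_diag2_def by (rule assoc_four_block_mat)

lemma pow_zero_ext: assumes "A \<in> carrier_mat n n" "A ^\<^sub>m k = 0\<^sub>m n n"
  shows "A ^\<^sub>m (k + j) = (0\<^sub>m n n :: 'a::semiring_1 mat)"
proof (induct j)
  case (Suc j)
  have "A ^\<^sub>m (k + Suc j) = A ^\<^sub>m (k + j) * A" by simp
  also have "\<dots> = 0\<^sub>m n n" using Suc assms(1) by simp
  finally show ?case .
qed (use assms in simp)

lemma nilpotent_bd2: assumes X: "X \<in> carrier_mat a a" and Y: "Y \<in> carrier_mat b b"
  and "nilpotent_mat X" "nilpotent_mat (Y :: 'a::semiring_1 mat)"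
  shows "nilpotent_mat (block_diag2 X Y)"
proof -
  obtain kx where kx: "X ^\<^sub>m kx = 0\<^sub>m a a" using assms unfolding nilpotent_mat_def by auto
  obtain ky where ky: "Y ^\<^sub>m ky = 0\<^sub>m b b" using assms unfolding nilpotent_mat_def by auto
  have "block_diag2 X Y ^\<^sub>m (kx + ky) = block_diag2 (0\<^sub>m a a) (0\<^sub>m b b)"
    using bd2_pow[OF X Y] pow_zero_ext[OF X kx, of ky] pow_zero_ext[OF Y ky, of kx]
    by (simp add: add.commute)
  also have "\<dots> = 0\<^sub>m (a+b) (a+b)" unfolding block_diag2_def by (rule eq_matI, auto)
  finally show ?thesis unfolding nilpotent_mat_def using bd2_carrier[OF X Y] by auto
qed


lemma nilpotent_bd2_D: assumes X: "X \<in> carrier_mat a a" and Y: "Y \<in> carrier_mat b b"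
  and "nilpotent_mat (block_diag2 X (Y :: 'a::semiring_1 mat))"
  shows "nilpotent_mat X \<and> nilpotent_mat Y"
proof -
  obtain k where "block_diag2 X Y ^\<^sub>m k = 0\<^sub>m (a+b) (a+b)"
    using assms bd2_carrier[OF X Y] unfolding nilpotent_mat_def by auto
  moreover have "0\<^sub>m (a+b) (a+b) = block_diag2 (0\<^sub>m a a) (0\<^sub>m b b :: 'a mat)"
    unfolding block_diag2_def by (rule eq_matI, auto)
  ultimately have eq: "block_diag2 (X ^\<^sub>m k) (Y ^\<^sub>m k) = block_diag2 (0\<^sub>m a a) (0\<^sub>m b b)"
    using bd2_pow[OF X Y, of k] by metis
  have "X ^\<^sub>m k = 0\<^sub>m a a \<and> Y ^\<^sub>m k = 0\<^sub>m b b"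
    using bd2_eq[OF pow_carrier_mat[OF X] zero_carrier_mat pow_carrier_mat[OF Y] zero_carrier_mat eq] .
  then show ?thesis unfolding nilpotent_mat_def using X Y by auto
qed

lemma nilpotent_sim: assumes "similar_mat_wit A B P Q" "nilpotent_mat B"
  shows "nilpotent_mat A"
proof -
  define n where "n = dim_row A"
  note w = similar_mat_witD[OF n_def assms(1)]
  obtain k where Bk: "B ^\<^sub>m k = 0\<^sub>m n n" using assms(2) w(5) unfolding nilpotent_mat_def by auto
  have "A ^\<^sub>m k = P * B ^\<^sub>m k * Q" by (rule similar_mat_wit_pow_id[OF assms(1)])
  also have "\<dots> = P * 0\<^sub>m n n * Q" unfolding Bk ..
  also have "\<dots> = 0\<^sub>m n n" using w(6,7) by simp
  finally show ?thesis using w(4) unfolding nilpotent_mat_def by auto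
qed

lemma bd2_swap: assumes X: "X \<in> carrier_mat a a" and Y: "Y \<in> carrier_mat b b"
  shows "similar_mat_wit (block_diag2 X Y) (block_diag2 Y (X :: 'a :: comm_ring_1 mat))
    (four_block_mat (0\<^sub>m a b) (1\<^sub>m a) (1\<^sub>m b) (0\<^sub>m b a))
    (four_block_mat (0\<^sub>m b a) (1\<^sub>m b) (1\<^sub>m a) (0\<^sub>m a b))"
proof (rule similar_mat_witI[of _ _ "a+b"])
  have dims: "dim_row X = a" "dim_col X = a" "dim_row Y = b" "dim_col Y = b" using X Y by auto
  have "four_block_mat (0\<^sub>m a b :: 'a mat) (1\<^sub>m a) (1\<^sub>m b) (0\<^sub>m b a) * four_block_mat (0\<^sub>m b a) (1\<^sub>m b) (1\<^sub>m a) (0\<^sub>m a b)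
     = four_block_mat (0\<^sub>m a b * 0\<^sub>m b a + 1\<^sub>m a * 1\<^sub>m a) (0\<^sub>m a b * 1\<^sub>m b + 1\<^sub>m a * 0\<^sub>m a b)
         (1\<^sub>m b * 0\<^sub>m b a + 0\<^sub>m b a * 1\<^sub>m a) (1\<^sub>m b * 1\<^sub>m b + 0\<^sub>m b a * 0\<^sub>m a b)"
    by (rule mult_four_block_mat[OF zero_carrier_mat one_carrier_mat one_carrier_mat zero_carrier_mat zero_carrier_mat one_carrier_mat one_carrier_mat zero_carrier_mat])
  also have "\<dots> = block_diag2 (1\<^sub>m a) (1\<^sub>m b)" unfolding block_diag2_def
    by (simp add: left_mult_one_mat[OF one_carrier_mat] left_add_zero_mat[OF one_carrier_mat] right_add_zero_mat[OF one_carrier_mat])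
  finally show "four_block_mat (0\<^sub>m a b :: 'a mat) (1\<^sub>m a) (1\<^sub>m b) (0\<^sub>m b a) * four_block_mat (0\<^sub>m b a) (1\<^sub>m b) (1\<^sub>m a) (0\<^sub>m a b) = 1\<^sub>m (a+b)"
    unfolding bd2_one .
  have "four_block_mat (0\<^sub>m b a :: 'a mat) (1\<^sub>m b) (1\<^sub>m a) (0\<^sub>m a b) * four_block_mat (0\<^sub>m a b) (1\<^sub>m a) (1\<^sub>m b) (0\<^sub>m b a)
     = four_block_mat (0\<^sub>m b a * 0\<^sub>m a b + 1\<^sub>m b * 1\<^sub>m b) (0\<^sub>m b a * 1\<^sub>m a + 1\<^sub>m b * 0\<^sub>m b a)
         (1\<^sub>m a * 0\<^sub>m a b + 0\<^sub>m a b * 1\<^sub>m b) (1\<^sub>m a * 1\<^sub>m a + 0\<^sub>m a b * 0\<^sub>m b a)"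
    by (rule mult_four_block_mat[OF zero_carrier_mat one_carrier_mat one_carrier_mat zero_carrier_mat zero_carrier_mat one_carrier_mat one_carrier_mat zero_carrier_mat])
  also have "\<dots> = block_diag2 (1\<^sub>m b) (1\<^sub>m a)" unfolding block_diag2_def
    by (simp add: left_mult_one_mat[OF one_carrier_mat] left_add_zero_mat[OF one_carrier_mat] right_add_zero_mat[OF one_carrier_mat])
  also have "\<dots> = 1\<^sub>m (a+b)" unfolding bd2_one by (simp add: add.commute)
  finally show "four_block_mat (0\<^sub>m b a :: 'a mat) (1\<^sub>m b) (1\<^sub>m a) (0\<^sub>m a b) * four_block_mat (0\<^sub>m a b) (1\<^sub>m a) (1\<^sub>m b) (0\<^sub>m b a) = 1\<^sub>m (a+b)" .
  have "four_block_mat (0\<^sub>m a b) (1\<^sub>m a) (1\<^sub>m b) (0\<^sub>m b a) * block_diag2 Y X =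
     four_block_mat (0\<^sub>m a b * Y + 1\<^sub>m a * 0\<^sub>m a b) (0\<^sub>m a b * 0\<^sub>m b a + 1\<^sub>m a * X)
       (1\<^sub>m b * Y + 0\<^sub>m b a * 0\<^sub>m a b) (1\<^sub>m b * 0\<^sub>m b a + 0\<^sub>m b a * X)"
    unfolding block_diag2_def dims by (rule mult_four_block_mat[OF zero_carrier_mat one_carrier_mat one_carrier_mat zero_carrier_mat Y zero_carrier_mat zero_carrier_mat X])
  also have "\<dots> = four_block_mat (0\<^sub>m a b) X Y (0\<^sub>m b a)" using X Y by simp
  finally have 1: "four_block_mat (0\<^sub>m a b) (1\<^sub>m a) (1\<^sub>m b) (0\<^sub>m b a) * block_diag2 Y X =
     four_block_mat (0\<^sub>m a b) X Y (0\<^sub>m b a)" .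
  have "four_block_mat (0\<^sub>m a b) X Y (0\<^sub>m b a) * four_block_mat (0\<^sub>m b a) (1\<^sub>m b) (1\<^sub>m a) (0\<^sub>m a b)
     = four_block_mat (0\<^sub>m a b * 0\<^sub>m b a + X * 1\<^sub>m a) (0\<^sub>m a b * 1\<^sub>m b + X * 0\<^sub>m a b)
         (Y * 0\<^sub>m b a + 0\<^sub>m b a * 1\<^sub>m a) (Y * 1\<^sub>m b + 0\<^sub>m b a * 0\<^sub>m a b)"
    by (rule mult_four_block_mat[OF zero_carrier_mat X Y zero_carrier_mat zero_carrier_mat one_carrier_mat one_carrier_mat zero_carrier_mat])
  also have "\<dots> = block_diag2 X Y" unfolding block_diag2_def dims using X Y by simp
  finally have 2: "four_block_mat (0\<^sub>m a b) X Y (0\<^sub>m b a) * four_block_mat (0\<^sub>m b a) (1\<^sub>m b) (1\<^sub>m a) (0\<^sub>m a b)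
     = block_diag2 X Y" .
  show "block_diag2 X Y = four_block_mat (0\<^sub>m a b) (1\<^sub>m a) (1\<^sub>m b) (0\<^sub>m b a) * block_diag2 Y X * four_block_mat (0\<^sub>m b a) (1\<^sub>m b) (1\<^sub>m a) (0\<^sub>m a b)"
    unfolding 1 2 ..
  show "block_diag2 Y X \<in> carrier_mat (a+b) (a+b)" using bd2_carrier[OF Y X] by (simp add: add.commute)
qed (use X Y in auto)

lemma jordan_block_det: "det (jordan_block m a) = (a :: 'a :: comm_ring_1) ^ m"
proof -
  have "upper_triangular (jordan_block m a)" unfolding upper_triangular_def by auto
  from det_upper_triangular[OF this jordan_block_carrier]
  have "det (jordan_block m a) = prod_list (diag_mat (jordan_block m a))" .
  also have "diag_mat (jordan_block m a) = replicate m a"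
    unfolding diag_mat_def by (intro nth_equalityI, auto)
  finally show ?thesis by simp
qed

lemma jordan_block_nilpotent: "nilpotent_mat (jordan_block m (0 :: 'a :: field))"
proof -
  have "jordan_block m (0 :: 'a) ^\<^sub>m m = 0\<^sub>m m m"
    unfolding jordan_block_zero_pow by (intro eq_matI, auto)
  then show ?thesis unfolding nilpotent_mat_def by auto
qed

lemma jordan_split:
  fixes n_as :: "(nat \<times> 'a :: field) list"
  shows "\<exists>P Q k1 k2 J N. similar_mat_wit (jordan_matrix n_as) (block_diag2 J N) P Q \<and>
     J \<in> carrier_mat k1 k1 \<and> N \<in> carrier_mat k2 k2 \<and> det J \<noteq> 0 \<and> nilpotent_mat N"
proof (induct n_as)
  case Nil
  have "jordan_matrix [] = (0\<^sub>m 0 0 :: 'a mat)" unfolding jordan_matrix_def by simp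
  also have "\<dots> = block_diag2 (1\<^sub>m 0) (0\<^sub>m 0 0)" unfolding block_diag2_def by (intro eq_matI, auto)
  finally have eq: "jordan_matrix [] = block_diag2 (1\<^sub>m 0) (0\<^sub>m 0 0 :: 'a mat)" .
  have "nilpotent_mat (0\<^sub>m 0 0 :: 'a mat)" unfolding nilpotent_mat_def
    by (intro conjI exI[of _ 0], auto intro!: eq_matI)
  moreover have "block_diag2 (1\<^sub>m 0 :: 'a mat) (0\<^sub>m 0 0) \<in> carrier_mat 0 (0::nat)"
    using bd2_carrier[of "1\<^sub>m 0 :: 'a mat" 0 "0\<^sub>m 0 0" 0] by simp
  then have "similar_mat_wit (block_diag2 (1\<^sub>m 0) (0\<^sub>m 0 0)) (block_diag2 (1\<^sub>m 0) (0\<^sub>m 0 0 :: 'a mat)) (1\<^sub>m 0) (1\<^sub>m 0)"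
    by (rule similar_mat_wit_refl)
  ultimately show ?case unfolding eq
    by (intro exI[of _ "1\<^sub>m 0"] exI[of _ 0] exI conjI, auto)
next
  case (Cons na rest)
  obtain m a where na: "na = (m,a)" by force
  from Cons obtain P Q k1 k2 J N where IH: "similar_mat_wit (jordan_matrix rest) (block_diag2 J N) P Q"
    and J: "J \<in> carrier_mat k1 k1" and N: "N \<in> carrier_mat k2 k2" and dJ: "det J \<noteq> 0"
    and nN: "nilpotent_mat N" by blast
  define R where "R = jordan_matrix rest"
  define jb where "jb = jordan_block m a"
  define r where "r = k1 + k2"
  have jb: "jb \<in> carrier_mat m m" unfolding jb_def by auto
  have JN: "block_diag2 J N \<in> carrier_mat r r" using J N unfolding r_def by simp
  note RR = similar_mat_witD(4,5)[OF refl IH[folded R_def]]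
  then have "dim_row R = r" using JN by (metis carrier_matD(1))
  with RR have R: "R \<in> carrier_mat r r" by simp
  note w = similar_mat_witD2[OF R IH[folded R_def]]
  have jm: "jordan_matrix (na # rest) = block_diag2 jb R"
    unfolding na jordan_matrix_def block_diag2_def jb_def R_def by (simp add: Let_def)
  have sim1: "similar_mat_wit (block_diag2 jb R) (block_diag2 jb (block_diag2 J N))
     (four_block_mat (1\<^sub>m m) (0\<^sub>m m r) (0\<^sub>m r m) P) (four_block_mat (1\<^sub>m m) (0\<^sub>m m r) (0\<^sub>m r m) Q)"
  proof -
    have d: "dim_row jb = m" "dim_col jb = m" "dim_row R = r" "dim_col R = r"
      "dim_row (block_diag2 J N) = r" "dim_col (block_diag2 J N) = r" using jb R JN by auto
    show ?thesis unfolding block_diag2_def[of jb] d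
      by (rule similar_mat_wit_four_block[OF similar_mat_wit_refl[OF jb] IH[folded R_def] _ _ jb R],
        use w in auto)
  qed
  show ?case
  proof (cases "a = 0")
    case False
    have "det (block_diag2 jb J) \<noteq> 0" using bd2_det[OF jb J] dJ False jordan_block_det[of m a]
      unfolding jb_def by auto
    then show ?thesis using sim1 unfolding jm bd2_assoc using bd2_carrier[OF jb J] N nN
      by blast
  next
    case True
    have nj: "nilpotent_mat jb" unfolding jb_def True by (rule jordan_block_nilpotent)
    have sim2: "similar_mat_wit (block_diag2 (block_diag2 jb J) N) (block_diag2 (block_diag2 J jb) N)
      (four_block_mat (four_block_mat (0\<^sub>m m k1) (1\<^sub>m m) (1\<^sub>m k1) (0\<^sub>m k1 m)) (0\<^sub>m (m+k1) k2) (0\<^sub>m k2 (m+k1)) (1\<^sub>m k2))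
      (four_block_mat (four_block_mat (0\<^sub>m k1 m) (1\<^sub>m k1) (1\<^sub>m m) (0\<^sub>m m k1)) (0\<^sub>m (m+k1) k2) (0\<^sub>m k2 (m+k1)) (1\<^sub>m k2))"
    proof -
      have c1: "block_diag2 jb J \<in> carrier_mat (m+k1) (m+k1)" using jb J by simp
      have c2: "block_diag2 J jb \<in> carrier_mat (m+k1) (m+k1)" using jb J bd2_carrier[OF J jb] by (simp add: add.commute)
      have d: "dim_row (block_diag2 jb J) = m+k1" "dim_col (block_diag2 jb J) = m+k1"
        "dim_row (block_diag2 J jb) = m+k1" "dim_col (block_diag2 J jb) = m+k1"
        "dim_row N = k2" "dim_col N = k2" using c1 c2 N by auto
      show ?thesis unfolding block_diag2_def[of "block_diag2 jb J"] block_diag2_def[of "block_diag2 J jb"] d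
        by (rule similar_mat_wit_four_block[OF bd2_swap[OF jb J] similar_mat_wit_refl[OF N] _ _ c1 N],
          auto)
    qed
    have "\<exists>P Q. similar_mat_wit (jordan_matrix (na # rest)) (block_diag2 J (block_diag2 jb N)) P Q"
      unfolding jm bd2_assoc[of J] using similar_mat_wit_trans[OF sim1[unfolded bd2_assoc] sim2] by blast
    moreover have "nilpotent_mat (block_diag2 jb N)" by (rule nilpotent_bd2[OF jb N nj nN])
    ultimately show ?thesis using J bd2_carrier[OF jb N] dJ by blast
  qed
qed

lemma det_pow_mat: assumes A: "A \<in> carrier_mat n n"
  shows "det (A ^\<^sub>m k) = det A ^ (k :: nat)"
proof (induct k)
  case (Suc k)
  have "det (A ^\<^sub>m Suc k) = det (A ^\<^sub>m k * A)" by simp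
  also have "\<dots> = det (A ^\<^sub>m k) * det A" by (rule det_mult[OF pow_carrier_mat[OF A] A])
  finally show ?case using Suc by simp
qed simp

lemma smult_zero_cancel: assumes "(d :: 'a :: field) \<noteq> 0" "X \<in> carrier_mat a b" "d \<cdot>\<^sub>m X = 0\<^sub>m a b"
  shows "X = 0\<^sub>m a b"
proof (rule eq_matI)
  fix i j assume ij: "i < dim_row (0\<^sub>m a b :: 'a mat)" "j < dim_col (0\<^sub>m a b :: 'a mat)"
  have "(d \<cdot>\<^sub>m X) $$ (i,j) = 0\<^sub>m a b $$ (i,j)" using assms(3) by (rule arg_cong)
  then have "d * X $$ (i,j) = 0" using assms(2) ij by simp
  then show "X $$ (i,j) = 0\<^sub>m a b $$ (i,j)" using assms(1) ij by simp
qed (use assms in auto)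

lemma sylv1: fixes J N X :: "'a::field mat"
  assumes J: "J \<in> carrier_mat a a" and N: "N \<in> carrier_mat b b" and X: "X \<in> carrier_mat a b"
    and dJ: "det J \<noteq> 0" and nN: "nilpotent_mat N" and c: "J * X = X * N"
  shows "X = 0\<^sub>m a b"
proof -
  have pk: "J ^\<^sub>m k * X = X * N ^\<^sub>m k" for k
  proof (induct k)
    case 0 then show ?case using J N X by simp
  next
    case (Suc k)
    have "J ^\<^sub>m Suc k * X = (J ^\<^sub>m k * J) * X" by simp
    also have "\<dots> = J ^\<^sub>m k * (J * X)" by (rule assoc_mult_mat[OF pow_carrier_mat[OF J] J X])
    also have "\<dots> = (J ^\<^sub>m k * X) * N" unfolding c by (rule assoc_mult_mat[OF pow_carrier_mat[OF J] X N, symmetric])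
    also have "\<dots> = X * (N ^\<^sub>m k * N)" unfolding Suc by (rule assoc_mult_mat[OF X pow_carrier_mat[OF N] N])
    finally show ?case by simp
  qed
  obtain k where Nk: "N ^\<^sub>m k = 0\<^sub>m b b" using nN N unfolding nilpotent_mat_def by auto
  define Jk where "Jk = J ^\<^sub>m k"
  have Jk: "Jk \<in> carrier_mat a a" unfolding Jk_def using J by simp
  have JkX: "Jk * X = 0\<^sub>m a b" using pk[of k] Nk X unfolding Jk_def by (simp add: right_mult_zero_mat)
  have d: "det Jk \<noteq> 0" unfolding Jk_def det_pow_mat[OF J] using dJ by simp
  have "det Jk \<cdot>\<^sub>m X = (det Jk \<cdot>\<^sub>m 1\<^sub>m a) * X" using X by (simp add: mult_smult_assoc_mat[OF one_carrier_mat X])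
  also have "\<dots> = (adj_mat Jk * Jk) * X" using adj_mat(3)[OF Jk] by simp
  also have "\<dots> = adj_mat Jk * (Jk * X)" by (rule assoc_mult_mat[OF adj_mat(1)[OF Jk] Jk X])
  also have "\<dots> = 0\<^sub>m a b" unfolding JkX using adj_mat(1)[OF Jk] by (simp add: right_mult_zero_mat)
  finally show ?thesis by (rule smult_zero_cancel[OF d X])
qed

lemma sylv2: fixes J N X :: "'a::field mat"
  assumes J: "J \<in> carrier_mat a a" and N: "N \<in> carrier_mat b b" and X: "X \<in> carrier_mat b a"
    and dJ: "det J \<noteq> 0" and nN: "nilpotent_mat N" and c: "N * X = X * J"
  shows "X = 0\<^sub>m b a"
proof -
  have pk: "N ^\<^sub>m k * X = X * J ^\<^sub>m k" for k
  proof (induct k)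
    case 0 then show ?case using J N X by simp
  next
    case (Suc k)
    have "N ^\<^sub>m Suc k * X = (N ^\<^sub>m k * N) * X" by simp
    also have "\<dots> = N ^\<^sub>m k * (N * X)" by (rule assoc_mult_mat[OF pow_carrier_mat[OF N] N X])
    also have "\<dots> = (N ^\<^sub>m k * X) * J" unfolding c by (rule assoc_mult_mat[OF pow_carrier_mat[OF N] X J, symmetric])
    also have "\<dots> = X * (J ^\<^sub>m k * J)" unfolding Suc by (rule assoc_mult_mat[OF X pow_carrier_mat[OF J] J])
    finally show ?case by simp
  qed
  obtain k where Nk: "N ^\<^sub>m k = 0\<^sub>m b b" using nN N unfolding nilpotent_mat_def by auto
  define Jk where "Jk = J ^\<^sub>m k"
  have Jk: "Jk \<in> carrier_mat a a" unfolding Jk_def using J by simp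
  have JkX: "X * Jk = 0\<^sub>m b a" using pk[of k] Nk X unfolding Jk_def by (simp add: left_mult_zero_mat)
  have d: "det Jk \<noteq> 0" unfolding Jk_def det_pow_mat[OF J] using dJ by simp
  have "det Jk \<cdot>\<^sub>m X = X * (det Jk \<cdot>\<^sub>m 1\<^sub>m a)" using X by (simp add: mult_smult_distrib[OF X one_carrier_mat])
  also have "\<dots> = X * (Jk * adj_mat Jk)" using adj_mat(2)[OF Jk] by simp
  also have "\<dots> = (X * Jk) * adj_mat Jk" by (rule assoc_mult_mat[OF X Jk adj_mat(1)[OF Jk], symmetric])
  also have "\<dots> = 0\<^sub>m b a" unfolding JkX using adj_mat(1)[OF Jk] by (simp add: left_mult_zero_mat)
  finally show ?thesis by (rule smult_zero_cancel[OF d X])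
qed

lemma four_block_eq:
  assumes "A \<in> carrier_mat r1 c1" "B \<in> carrier_mat r1 c2" "C \<in> carrier_mat r2 c1" "D \<in> carrier_mat r2 c2"
    "A' \<in> carrier_mat r1 c1" "B' \<in> carrier_mat r1 c2" "C' \<in> carrier_mat r2 c1" "D' \<in> carrier_mat r2 c2"
    and eq: "four_block_mat A B C D = four_block_mat A' B' C' D'"
  shows "A = A' \<and> B = B' \<and> C = C' \<and> D = D'"
proof (intro conjI)
  have ix: "four_block_mat A B C D $$ (i,j) = four_block_mat A' B' C' D' $$ (i,j)" for i j
    using eq by simp
  show "A = A'"
  proof (rule eq_matI)
    fix i j assume ij: "i < dim_row A'" "j < dim_col A'"
    show "A $$ (i,j) = A' $$ (i,j)" using ix[of i j] assms(1-8) ij by auto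
  qed (use assms in auto)
  show "B = B'"
  proof (rule eq_matI)
    fix i j assume ij: "i < dim_row B'" "j < dim_col B'"
    show "B $$ (i,j) = B' $$ (i,j)" using ix[of i "j + c1"] assms(1-8) ij by auto
  qed (use assms in auto)
  show "C = C'"
  proof (rule eq_matI)
    fix i j assume ij: "i < dim_row C'" "j < dim_col C'"
    show "C $$ (i,j) = C' $$ (i,j)" using ix[of "i + r1" j] assms(1-8) ij by auto
  qed (use assms in auto)
  show "D = D'"
  proof (rule eq_matI)
    fix i j assume ij: "i < dim_row D'" "j < dim_col D'"
    show "D $$ (i,j) = D' $$ (i,j)" using ix[of "i + r1" "j + c1"] assms(1-8) ij by auto
  qed (use assms in auto)
qed

lemma bd2_def': assumes "X \<in> carrier_mat a a" "Y \<in> carrier_mat b b"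
  shows "block_diag2 X Y = four_block_mat X (0\<^sub>m a b) (0\<^sub>m b a) Y"
  unfolding block_diag2_def using assms by auto

lemma commute_block: fixes J N Y :: "'a::field mat"
  assumes J: "J \<in> carrier_mat k1 k1" and N: "N \<in> carrier_mat k2 k2" and dJ: "det J \<noteq> 0"
    and nN: "nilpotent_mat N" and Y: "Y \<in> carrier_mat (k1+k2) (k1+k2)"
    and c: "block_diag2 J N * Y = Y * block_diag2 J N"
  shows "\<exists>Y1 Y2. Y = block_diag2 Y1 Y2 \<and> Y1 \<in> carrier_mat k1 k1 \<and> Y2 \<in> carrier_mat k2 k2"
proof -
  obtain Y1 Y2 Y3 Y4 where sb: "split_block Y k1 k1 = (Y1,Y2,Y3,Y4)" by (cases "split_block Y k1 k1") auto
  have dY: "dim_row Y = k1 + k2" "dim_col Y = k1 + k2" using Y by auto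
  note sp = split_block[OF sb dY]
  have bJN: "block_diag2 J N = four_block_mat J (0\<^sub>m k1 k2) (0\<^sub>m k2 k1) N" by (rule bd2_def'[OF J N])
  have "block_diag2 J N * Y = four_block_mat (J * Y1 + 0\<^sub>m k1 k2 * Y3) (J * Y2 + 0\<^sub>m k1 k2 * Y4)
      (0\<^sub>m k2 k1 * Y1 + N * Y3) (0\<^sub>m k2 k1 * Y2 + N * Y4)"
    unfolding bJN sp(5) by (rule mult_four_block_mat[OF J zero_carrier_mat zero_carrier_mat N sp(1-4)])
  also have "\<dots> = four_block_mat (J * Y1) (J * Y2) (N * Y3) (N * Y4)" using J N sp(1-4) by simp
  finally have l: "block_diag2 J N * Y = four_block_mat (J * Y1) (J * Y2) (N * Y3) (N * Y4)" .
  have "Y * block_diag2 J N = four_block_mat (Y1 * J + Y2 * 0\<^sub>m k2 k1) (Y1 * 0\<^sub>m k1 k2 + Y2 * N)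
      (Y3 * J + Y4 * 0\<^sub>m k2 k1) (Y3 * 0\<^sub>m k1 k2 + Y4 * N)"
    unfolding bJN sp(5) by (rule mult_four_block_mat[OF sp(1-4) J zero_carrier_mat zero_carrier_mat N])
  also have "\<dots> = four_block_mat (Y1 * J) (Y2 * N) (Y3 * J) (Y4 * N)" using J N sp(1-4) by simp
  finally have r: "Y * block_diag2 J N = four_block_mat (Y1 * J) (Y2 * N) (Y3 * J) (Y4 * N)" .
  have "J * Y2 = Y2 * N \<and> N * Y3 = Y3 * J"
    using four_block_eq[of "J * Y1" k1 k1 "J * Y2" k2 "N * Y3" k2 "N * Y4" "Y1 * J" "Y2 * N" "Y3 * J" "Y4 * N"]
      c[unfolded l r] J N sp(1-4) by auto
  then have "Y2 = 0\<^sub>m k1 k2" "Y3 = 0\<^sub>m k2 k1"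
    using sylv1[OF J N sp(2) dJ nN] sylv2[OF J N sp(3) dJ nN] by auto
  then have "Y = block_diag2 Y1 Y4" unfolding sp(5) using bd2_def'[OF sp(1) sp(4)] by simp
  then show ?thesis using sp(1,4) by blast
qed

lemma fitting: fixes M :: "complex mat"
  assumes M: "M \<in> carrier_mat n n"
  shows "\<exists>P Q k1 k2 J N. similar_mat_wit M (block_diag2 J N) P Q \<and>
     J \<in> carrier_mat k1 k1 \<and> N \<in> carrier_mat k2 k2 \<and> det J \<noteq> 0 \<and> nilpotent_mat N"
proof -
  obtain as where "char_poly M = (\<Prod> a \<leftarrow> as. [:- a, 1:])" using char_poly_factorized[OF M] by auto
  from jordan_nf_exists[OF M this] obtain n_as where "jordan_nf M n_as" by auto
  then obtain P0 Q0 where w0: "similar_mat_wit M (jordan_matrix n_as) P0 Q0"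
    unfolding jordan_nf_def similar_mat_def by auto
  from jordan_split[of n_as] obtain P Q k1 k2 J N where
    w: "similar_mat_wit (jordan_matrix n_as) (block_diag2 J N) P Q" and
    rest: "J \<in> carrier_mat k1 k1 \<and> N \<in> carrier_mat k2 k2 \<and> det J \<noteq> 0 \<and> nilpotent_mat N" by blast
  show ?thesis using similar_mat_wit_trans[OF w0 w] rest by blast
qed

lemma conj_mult: assumes U: "U \<in> carrier_mat n n" and Ui: "Ui \<in> carrier_mat n n" and inv: "Ui * U = 1\<^sub>m n"
  and X: "X \<in> carrier_mat n n" and Z: "Z \<in> carrier_mat n n"
  shows "(U * X * Ui) * (U * Z * Ui) = U * (X * Z) * (Ui :: 'a :: semiring_1 mat)"
proof -
  have canc: "Ui * (U * W) = W" if W: "W \<in> carrier_mat n nc" for W nc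
  proof -
    have "Ui * (U * W) = (Ui * U) * W" using U Ui W by simp
    also have "\<dots> = W" unfolding inv using W by simp
    finally show ?thesis .
  qed
  have "(U * X * Ui) * (U * Z * Ui) = U * (X * (Ui * (U * (Z * Ui))))" using U Ui X Z by (simp add: assoc_mult_mat[of _ n n _ n _ n])
  also have "\<dots> = U * (X * (Z * Ui))" using canc[of "Z * Ui" n] Z Ui by simp
  also have "\<dots> = U * (X * Z) * Ui" using U Ui X Z by (simp add: assoc_mult_mat[of _ n n _ n _ n])
  finally show ?thesis .
qed

lemma bd2_commute: assumes "A1 \<in> carrier_mat a a" "B1 \<in> carrier_mat a a" "A2 \<in> carrier_mat b b" "B2 \<in> carrier_mat b b"
  and "block_diag2 A1 A2 * block_diag2 B1 B2 = block_diag2 B1 B2 * block_diag2 A1 (A2 :: 'a :: semiring_1 mat)"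
  shows "A1 * B1 = B1 * A1 \<and> A2 * B2 = B2 * A2"
  using assms(5) unfolding bd2_mult[OF assms(1,2,3,4)] bd2_mult[OF assms(2,1,4,3)]
  by (intro bd2_eq[of _ a _ _ b], use assms(1-4) in auto)

lemma split_step: fixes M X Y :: "complex mat"
  assumes M: "M \<in> carrier_mat n n" and X: "X \<in> carrier_mat n n" and Y: "Y \<in> carrier_mat n n"
    and MX: "M * X = X * M" and MY: "M * Y = Y * M" and XY: "X * Y = Y * X"
  shows "\<exists>U Ui k1 k2 J N X1 X2 Y1 Y2. U \<in> carrier_mat n n \<and> Ui \<in> carrier_mat n n \<and>
    U * Ui = 1\<^sub>m n \<and> Ui * U = 1\<^sub>m n \<and> k1 + k2 = n \<and>
    J \<in> carrier_mat k1 k1 \<and> N \<in> carrier_mat k2 k2 \<and> X1 \<in> carrier_mat k1 k1 \<and> X2 \<in> carrier_mat k2 k2 \<and>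
    Y1 \<in> carrier_mat k1 k1 \<and> Y2 \<in> carrier_mat k2 k2 \<and>
    U * M * Ui = block_diag2 J N \<and> U * X * Ui = block_diag2 X1 X2 \<and> U * Y * Ui = block_diag2 Y1 Y2 \<and>
    det J \<noteq> 0 \<and> nilpotent_mat N \<and> N * X2 = X2 * N \<and> N * Y2 = Y2 * N \<and> X2 * Y2 = Y2 * X2"
proof -
  from fitting[OF M] obtain P Q k1 k2 J N where w: "similar_mat_wit M (block_diag2 J N) P Q"
    and J: "J \<in> carrier_mat k1 k1" and N: "N \<in> carrier_mat k2 k2" and dJ: "det J \<noteq> 0"
    and nN: "nilpotent_mat N" by blast
  note wd = similar_mat_witD2[OF M w]
  have "block_diag2 J N \<in> carrier_mat (k1+k2) (k1+k2)" using J N by simp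
  with wd(5) have k: "k1 + k2 = n" by auto
  have P: "P \<in> carrier_mat n n" and Q: "Q \<in> carrier_mat n n" using wd by auto
  have D: "block_diag2 J N \<in> carrier_mat n n" using wd by auto
  have QMP: "Q * M * P = block_diag2 J N"
  proof -
    have "Q * M * P = (Q * P) * block_diag2 J N * (Q * P)"
      unfolding wd(3) using P Q D by (simp add: assoc_mult_mat[of _ n n _ n _ n])
    also have "\<dots> = block_diag2 J N" unfolding wd(2) using D by simp
    finally show ?thesis .
  qed
  have comm: "(Q * A * P) * (Q * B * P) = (Q * B * P) * (Q * A * P)"
    if "A \<in> carrier_mat n n" "B \<in> carrier_mat n n" "A * B = B * A" for A B
    using conj_mult[OF Q P wd(1) that(1,2)] conj_mult[OF Q P wd(1) that(2,1)] that(3) by simp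
  have "\<exists>X1 X2. Q * X * P = block_diag2 X1 X2 \<and> X1 \<in> carrier_mat k1 k1 \<and> X2 \<in> carrier_mat k2 k2"
    by (rule commute_block[OF J N dJ nN], use X P Q k in simp, use comm[OF M X MX] QMP in simp)
  then obtain X1 X2 where X': "Q * X * P = block_diag2 X1 X2" and X1: "X1 \<in> carrier_mat k1 k1"
    and X2: "X2 \<in> carrier_mat k2 k2" by blast
  have "\<exists>Y1 Y2. Q * Y * P = block_diag2 Y1 Y2 \<and> Y1 \<in> carrier_mat k1 k1 \<and> Y2 \<in> carrier_mat k2 k2"
    by (rule commute_block[OF J N dJ nN], use Y P Q k in simp, use comm[OF M Y MY] QMP in simp)
  then obtain Y1 Y2 where Y': "Q * Y * P = block_diag2 Y1 Y2" and Y1: "Y1 \<in> carrier_mat k1 k1"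
    and Y2: "Y2 \<in> carrier_mat k2 k2" by blast
  have c1: "N * X2 = X2 * N" using bd2_commute[OF J X1 N X2] comm[OF M X MX] QMP X' by simp
  have c2: "N * Y2 = Y2 * N" using bd2_commute[OF J Y1 N Y2] comm[OF M Y MY] QMP Y' by simp
  have c3: "X2 * Y2 = Y2 * X2" using bd2_commute[OF X1 Y1 X2 Y2] comm[OF X Y XY] X' Y' by simp
  show ?thesis
    by (rule exI[of _ Q], rule exI[of _ P], intro exI conjI,
      rule Q, rule P, rule wd(2), rule wd(1), rule k, rule J, rule N, rule X1, rule X2, rule Y1, rule Y2,
      rule QMP, rule X', rule Y', rule dJ, rule nN, rule c1, rule c2, rule c3)
qed

lemma nilp_conj: assumes U: "U \<in> carrier_mat n n" and Ui: "Ui \<in> carrier_mat n n"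
  and inv: "U * Ui = 1\<^sub>m n" "Ui * U = 1\<^sub>m n" and X: "X \<in> carrier_mat n n" and nX: "nilpotent_mat X"
  and B: "U * X * Ui = B"
  shows "nilpotent_mat B"
proof -
  have "similar_mat_wit B X U Ui"
    by (rule similar_mat_witI[OF inv B[symmetric]], use U Ui X B in auto)
  then show ?thesis using nX by (rule nilpotent_sim)
qed

lemma ext_inv: assumes V: "V \<in> carrier_mat m m" and Vi: "Vi \<in> carrier_mat m m"
  and inv: "V * Vi = 1\<^sub>m m" "Vi * V = 1\<^sub>m m"
  shows "block_diag2 (1\<^sub>m a) V \<in> carrier_mat (a+m) (a+m)" "block_diag2 (1\<^sub>m a) Vi \<in> carrier_mat (a+m) (a+m)"
    "block_diag2 (1\<^sub>m a) V * block_diag2 (1\<^sub>m a) Vi = 1\<^sub>m (a+m)"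
    "block_diag2 (1\<^sub>m a) Vi * block_diag2 (1\<^sub>m a) V = (1\<^sub>m (a+m) :: 'a :: semiring_1 mat)"
    "\<And>Z T. Z \<in> carrier_mat a a \<Longrightarrow> T \<in> carrier_mat m m \<Longrightarrow>
       block_diag2 (1\<^sub>m a) V * block_diag2 Z T * block_diag2 (1\<^sub>m a) Vi = block_diag2 Z (V * T * Vi)"
proof -
  show "block_diag2 (1\<^sub>m a) V \<in> carrier_mat (a+m) (a+m)" "block_diag2 (1\<^sub>m a) Vi \<in> carrier_mat (a+m) (a+m)"
    using V Vi by auto
  show "block_diag2 (1\<^sub>m a) V * block_diag2 (1\<^sub>m a) Vi = 1\<^sub>m (a+m)"
    unfolding bd2_mult[OF one_carrier_mat one_carrier_mat V Vi] inv by (simp add: bd2_one)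
  show "block_diag2 (1\<^sub>m a) Vi * block_diag2 (1\<^sub>m a) V = 1\<^sub>m (a+m)"
    unfolding bd2_mult[OF one_carrier_mat one_carrier_mat Vi V] inv by (simp add: bd2_one)
  fix Z T :: "'a mat" assume Z: "Z \<in> carrier_mat a a" and T: "T \<in> carrier_mat m m"
  show "block_diag2 (1\<^sub>m a) V * block_diag2 Z T * block_diag2 (1\<^sub>m a) Vi = block_diag2 Z (V * T * Vi)"
    unfolding bd2_mult[OF one_carrier_mat Z V T]
    using bd2_mult[of "1\<^sub>m a * Z" a "1\<^sub>m a" "V * T" m Vi] Z V T Vi by simp
qed

lemma comp_inv: assumes U: "U \<in> carrier_mat n n" and Ui: "Ui \<in> carrier_mat n n"
  and inv: "U * Ui = 1\<^sub>m n" "Ui * U = 1\<^sub>m n"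
  and W: "W \<in> carrier_mat n n" and Wi: "Wi \<in> carrier_mat n n"
  and inv2: "W * Wi = 1\<^sub>m n" "Wi * W = 1\<^sub>m n"
  shows "W * U \<in> carrier_mat n n" "Ui * Wi \<in> carrier_mat n n"
    "(W * U) * (Ui * Wi) = 1\<^sub>m n" "(Ui * Wi) * (W * U) = (1\<^sub>m n :: 'a :: semiring_1 mat)"
    "\<And>X. X \<in> carrier_mat n n \<Longrightarrow> (W * U) * X * (Ui * Wi) = W * (U * X * Ui) * Wi"
proof -
  note [simp] = assoc_mult_mat[of _ n n _ n _ n]
  show "W * U \<in> carrier_mat n n" "Ui * Wi \<in> carrier_mat n n" using assms by auto
  have "(W * U) * (Ui * Wi) = W * (U * (Ui * Wi))" using assms by simp
  also have "\<dots> = W * ((U * Ui) * Wi)" using assoc_mult_mat[OF U Ui Wi] by simp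
  finally show "(W * U) * (Ui * Wi) = 1\<^sub>m n" using inv inv2 W Wi by simp
  have "(Ui * Wi) * (W * U) = Ui * (Wi * (W * U))" using assms by simp
  also have "\<dots> = Ui * ((Wi * W) * U)" using assoc_mult_mat[OF Wi W U] by simp
  finally show "(Ui * Wi) * (W * U) = 1\<^sub>m n" using inv inv2 U Ui by simp
  fix X :: "'a mat" assume "X \<in> carrier_mat n n"
  then show "(W * U) * X * (Ui * Wi) = W * (U * X * Ui) * Wi" using assms by simp
qed

lemma det_invertible: assumes J: "J \<in> carrier_mat k k" and d: "det J \<noteq> (0 :: 'a :: field)"
  shows "invertible_mat J"
proof -
  define B where "B = (1 / det J) \<cdot>\<^sub>m adj_mat J"
  have B: "B \<in> carrier_mat k k" unfolding B_def using adj_mat(1)[OF J] by simp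
  have "J * B = (1 / det J) \<cdot>\<^sub>m (J * adj_mat J)" unfolding B_def by (rule mult_smult_distrib[OF J adj_mat(1)[OF J]])
  also have "\<dots> = 1\<^sub>m k" unfolding adj_mat(2)[OF J] using d by (intro eq_matI, auto)
  finally have 1: "J * B = 1\<^sub>m k" .
  have "B * J = (1 / det J) \<cdot>\<^sub>m (adj_mat J * J)" unfolding B_def by (rule mult_smult_assoc_mat[OF adj_mat(1)[OF J] J])
  also have "\<dots> = 1\<^sub>m k" unfolding adj_mat(3)[OF J] using d by (intro eq_matI, auto)
  finally have 2: "B * J = 1\<^sub>m k" .
  show ?thesis unfolding invertible_mat_def inverts_mat_def using 1 2 J B by auto
qed

lemma pow_left: assumes N: "N \<in> carrier_mat m m" shows "N * N ^\<^sub>m j = N ^\<^sub>m Suc j"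
proof (induct j)
  case 0 then show ?case using N by simp
next
  case (Suc j)
  have "N * N ^\<^sub>m Suc j = (N * N ^\<^sub>m j) * N" using assoc_mult_mat[OF N pow_carrier_mat[OF N] N] by simp
  then show ?case unfolding Suc by simp
qed

lemma comm_pow: assumes M: "M \<in> carrier_mat m m" and N: "N \<in> carrier_mat m m" and c: "M * N = N * M"
  shows "M * N ^\<^sub>m j = N ^\<^sub>m j * M"
proof (induct j)
  case 0 then show ?case using M N by simp
next
  case (Suc j)
  have "M * N ^\<^sub>m Suc j = (M * N ^\<^sub>m j) * N" using assoc_mult_mat[OF M pow_carrier_mat[OF N] N] by simp
  also have "\<dots> = N ^\<^sub>m j * (M * N)" unfolding Suc by (rule assoc_mult_mat[OF pow_carrier_mat[OF N] M N])
  also have "\<dots> = N ^\<^sub>m Suc j * M" unfolding c using assoc_mult_mat[OF pow_carrier_mat[OF N] N M] by simp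
  finally show ?case .
qed

lemma mat_vec_zero: "A \<in> carrier_mat m n \<Longrightarrow> A *\<^sub>v 0\<^sub>v n = (0\<^sub>v m :: 'a :: semiring_0 vec)"
  by (intro eq_vecI, auto simp: scalar_prod_def)

lemma smult_mat_vec: "A \<in> carrier_mat m n \<Longrightarrow> v \<in> carrier_vec n \<Longrightarrow>
  (k \<cdot>\<^sub>m A) *\<^sub>v v = k \<cdot>\<^sub>v (A *\<^sub>v v :: 'a :: comm_ring_1 vec)"
  by (intro eq_vecI, auto simp: scalar_prod_def sum_distrib_left mult.assoc)

lemma kernel_step: assumes N: "N \<in> carrier_mat m m" and nN: "nilpotent_mat N"
  and v: "v \<in> carrier_vec m" and v0: "v \<noteq> 0\<^sub>v m"
  shows "\<exists>j. N ^\<^sub>m j *\<^sub>v v \<noteq> 0\<^sub>v m \<and> N *\<^sub>v (N ^\<^sub>m j *\<^sub>v v) = (0\<^sub>v m :: 'a :: field vec)"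
proof -
  obtain k where Nk: "N ^\<^sub>m k = 0\<^sub>m m m" using nN N unfolding nilpotent_mat_def by auto
  have Pk: "N ^\<^sub>m k *\<^sub>v v = 0\<^sub>v m" unfolding Nk using v by (intro eq_vecI, auto simp: scalar_prod_def)
  define j0 where "j0 = (LEAST j. N ^\<^sub>m j *\<^sub>v v = 0\<^sub>v m)"
  have P0: "N ^\<^sub>m j0 *\<^sub>v v = 0\<^sub>v m" unfolding j0_def using Pk by (rule LeastI)
  have "N ^\<^sub>m 0 *\<^sub>v v = v" using N v by simp
  then have "j0 \<noteq> 0" using P0 v0 by metis
  then obtain j where j: "j0 = Suc j" by (cases j0, auto)
  have "N ^\<^sub>m j *\<^sub>v v \<noteq> 0\<^sub>v m"
  proof
    assume "N ^\<^sub>m j *\<^sub>v v = 0\<^sub>v m"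
    then have "j0 \<le> j" unfolding j0_def by (rule Least_le)
    then show False using j by simp
  qed
  moreover have "N *\<^sub>v (N ^\<^sub>m j *\<^sub>v v) = 0\<^sub>v m"
    using P0 unfolding j pow_left[OF N, of j, symmetric] assoc_mult_mat_vec[OF N pow_carrier_mat[OF N] v] .
  ultimately show ?thesis by blast
qed

lemma kill: assumes M: "M \<in> carrier_mat m m" and N: "N \<in> carrier_mat m m" and c: "M * N = N * M"
  and v: "v \<in> carrier_vec m" and Mv: "M *\<^sub>v v = 0\<^sub>v m"
  shows "M *\<^sub>v (N ^\<^sub>m j *\<^sub>v v) = (0\<^sub>v m :: 'a :: comm_ring_1 vec)"
proof -
  have "M *\<^sub>v (N ^\<^sub>m j *\<^sub>v v) = (M * N ^\<^sub>m j) *\<^sub>v v" by (rule assoc_mult_mat_vec[OF M pow_carrier_mat[OF N] v, symmetric])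
  also have "\<dots> = N ^\<^sub>m j *\<^sub>v (M *\<^sub>v v)" unfolding comm_pow[OF M N c] by (rule assoc_mult_mat_vec[OF pow_carrier_mat[OF N] M v])
  finally show ?thesis unfolding Mv using mat_vec_zero[OF pow_carrier_mat[OF N]] by simp
qed

lemma conj_lin: fixes U Ui E A B :: "'a :: comm_ring_1 mat"
  assumes U: "U \<in> carrier_mat n n" and Ui: "Ui \<in> carrier_mat n n"
  and E: "E \<in> carrier_mat n n" and A: "A \<in> carrier_mat n n" and B: "B \<in> carrier_mat n n"
  shows "U * (l \<cdot>\<^sub>m E - A - w \<cdot>\<^sub>m B) * Ui = l \<cdot>\<^sub>m (U * E * Ui) - U * A * Ui - w \<cdot>\<^sub>m (U * B * Ui)"
proof -
  have "U * (l \<cdot>\<^sub>m E - A - w \<cdot>\<^sub>m B) = U * (l \<cdot>\<^sub>m E - A) - U * (w \<cdot>\<^sub>m B)"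
    by (rule mult_minus_distrib_mat[OF U], use E A B in auto)
  also have "U * (l \<cdot>\<^sub>m E - A) = U * (l \<cdot>\<^sub>m E) - U * A"
    by (rule mult_minus_distrib_mat[OF U], use E A B in auto)
  also have "U * (l \<cdot>\<^sub>m E) = l \<cdot>\<^sub>m (U * E)" by (rule mult_smult_distrib[OF U E])
  also have "U * (w \<cdot>\<^sub>m B) = w \<cdot>\<^sub>m (U * B)" by (rule mult_smult_distrib[OF U B])
  finally have 1: "U * (l \<cdot>\<^sub>m E - A - w \<cdot>\<^sub>m B) = l \<cdot>\<^sub>m (U * E) - U * A - w \<cdot>\<^sub>m (U * B)" .
  have "(l \<cdot>\<^sub>m (U * E) - U * A - w \<cdot>\<^sub>m (U * B)) * Ui = (l \<cdot>\<^sub>m (U * E) - U * A) * Ui - (w \<cdot>\<^sub>m (U * B)) * Ui"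
    by (rule minus_mult_distrib_mat[OF _ _ Ui], use U E A B in auto)
  also have "(l \<cdot>\<^sub>m (U * E) - U * A) * Ui = (l \<cdot>\<^sub>m (U * E)) * Ui - (U * A) * Ui"
    by (rule minus_mult_distrib_mat[OF _ _ Ui], use U E A B in auto)
  also have "(l \<cdot>\<^sub>m (U * E)) * Ui = l \<cdot>\<^sub>m (U * E * Ui)" by (rule mult_smult_assoc_mat[OF _ Ui], use U E in auto)
  also have "(w \<cdot>\<^sub>m (U * B)) * Ui = w \<cdot>\<^sub>m (U * B * Ui)" by (rule mult_smult_assoc_mat[OF _ Ui], use U B in auto)
  finally show ?thesis unfolding 1 .
qed

lemma bd2_lin: fixes X1 :: "'a :: comm_ring_1 mat"
  assumes "X1 \<in> carrier_mat a a" "Y1 \<in> carrier_mat a a" "Z1 \<in> carrier_mat a a"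
    "X2 \<in> carrier_mat b b" "Y2 \<in> carrier_mat b b" "Z2 \<in> carrier_mat b b"
  shows "l \<cdot>\<^sub>m block_diag2 X1 X2 - block_diag2 Y1 Y2 - w \<cdot>\<^sub>m block_diag2 Z1 Z2 =
    block_diag2 (l \<cdot>\<^sub>m X1 - Y1 - w \<cdot>\<^sub>m Z1) (l \<cdot>\<^sub>m X2 - Y2 - w \<cdot>\<^sub>m Z2)"
  using assms by (simp add: bd2_smult bd2_minus[of _ a _ _ b] minus_carrier_mat)

lemma conj_det: fixes U Ui K :: "'a :: comm_ring_1 mat"
  assumes U: "U \<in> carrier_mat n n" and Ui: "Ui \<in> carrier_mat n n" and inv: "U * Ui = 1\<^sub>m n"
  and K: "K \<in> carrier_mat n n"
  shows "det (U * K * Ui) = det K"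
proof -
  have "det (U * K * Ui) = det U * det K * det Ui"
    using det_mult[OF mult_carrier_mat[OF U K] Ui] det_mult[OF U K] by simp
  also have "\<dots> = det K * det (U * Ui)" using det_mult[OF U Ui] by (simp add: ac_simps)
  finally show ?thesis unfolding inv by simp
qed

lemma common_kernel: fixes X Y Z :: "'a :: field mat"
  assumes X: "X \<in> carrier_mat k k" and Y: "Y \<in> carrier_mat k k" and Z: "Z \<in> carrier_mat k k"
  and nX: "nilpotent_mat X" and nY: "nilpotent_mat Y" and nZ: "nilpotent_mat Z"
  and XY: "X * Y = Y * X" and XZ: "X * Z = Z * X" and YZ: "Y * Z = Z * Y" and k: "k > 0"
  shows "\<exists>v. v \<in> carrier_vec k \<and> v \<noteq> 0\<^sub>v k \<and> X *\<^sub>v v = 0\<^sub>v k \<and> Y *\<^sub>v v = 0\<^sub>v k \<and> Z *\<^sub>v v = 0\<^sub>v k"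
proof -
  define v0 where "v0 = (unit_vec k 0 :: 'a vec)"
  have v0: "v0 \<in> carrier_vec k" "v0 \<noteq> 0\<^sub>v k" unfolding v0_def using k by auto
  from kernel_step[OF X nX v0] obtain j1 where j1: "X ^\<^sub>m j1 *\<^sub>v v0 \<noteq> 0\<^sub>v k" "X *\<^sub>v (X ^\<^sub>m j1 *\<^sub>v v0) = 0\<^sub>v k" by blast
  define v1 where "v1 = X ^\<^sub>m j1 *\<^sub>v v0"
  have v1: "v1 \<in> carrier_vec k" "v1 \<noteq> 0\<^sub>v k" "X *\<^sub>v v1 = 0\<^sub>v k" unfolding v1_def using j1 X v0 mult_mat_vec_carrier[OF pow_carrier_mat[OF X] v0(1), of j1] by auto
  from kernel_step[OF Y nY v1(1,2)] obtain j2 where j2: "Y ^\<^sub>m j2 *\<^sub>v v1 \<noteq> 0\<^sub>v k" "Y *\<^sub>v (Y ^\<^sub>m j2 *\<^sub>v v1) = 0\<^sub>v k" by blast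
  define v2 where "v2 = Y ^\<^sub>m j2 *\<^sub>v v1"
  have v2: "v2 \<in> carrier_vec k" "v2 \<noteq> 0\<^sub>v k" "Y *\<^sub>v v2 = 0\<^sub>v k" unfolding v2_def using j2 Y v1 mult_mat_vec_carrier[OF pow_carrier_mat[OF Y] v1(1), of j2] by auto
  have v2X: "X *\<^sub>v v2 = 0\<^sub>v k" unfolding v2_def by (rule kill[OF X Y XY v1(1,3)])
  from kernel_step[OF Z nZ v2(1,2)] obtain j3 where j3: "Z ^\<^sub>m j3 *\<^sub>v v2 \<noteq> 0\<^sub>v k" "Z *\<^sub>v (Z ^\<^sub>m j3 *\<^sub>v v2) = 0\<^sub>v k" by blast
  define v3 where "v3 = Z ^\<^sub>m j3 *\<^sub>v v2"
  have v3: "v3 \<in> carrier_vec k" "v3 \<noteq> 0\<^sub>v k" "Z *\<^sub>v v3 = 0\<^sub>v k" unfolding v3_def using j3 Z v2 mult_mat_vec_carrier[OF pow_carrier_mat[OF Z] v2(1), of j3] by auto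
  have "X *\<^sub>v v3 = 0\<^sub>v k" unfolding v3_def by (rule kill[OF X Z XZ v2(1) v2X])
  moreover have "Y *\<^sub>v v3 = 0\<^sub>v k" unfolding v3_def by (rule kill[OF Y Z YZ v2(1,3)])
  ultimately show ?thesis using v3 by blast
qed

lemma nil_det0: fixes X Y Z :: "complex mat"
  assumes X: "X \<in> carrier_mat k k" and Y: "Y \<in> carrier_mat k k" and Z: "Z \<in> carrier_mat k k"
  and nX: "nilpotent_mat X" and nY: "nilpotent_mat Y" and nZ: "nilpotent_mat Z"
  and XY: "X * Y = Y * X" and XZ: "X * Z = Z * X" and YZ: "Y * Z = Z * Y" and k: "k > 0"
  shows "det (l \<cdot>\<^sub>m X - Y - w \<cdot>\<^sub>m Z) = 0"
proof -
  obtain v where v: "v \<in> carrier_vec k" "v \<noteq> 0\<^sub>v k" "X *\<^sub>v v = 0\<^sub>v k" "Y *\<^sub>v v = 0\<^sub>v k" "Z *\<^sub>v v = 0\<^sub>v k"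
    using common_kernel[OF assms] by blast
  have K: "l \<cdot>\<^sub>m X - Y - w \<cdot>\<^sub>m Z \<in> carrier_mat k k" using X Y Z by (simp add: minus_carrier_mat)
  have "(l \<cdot>\<^sub>m X - Y - w \<cdot>\<^sub>m Z) *\<^sub>v v = (l \<cdot>\<^sub>m X - Y) *\<^sub>v v - (w \<cdot>\<^sub>m Z) *\<^sub>v v"
    by (rule minus_mult_distrib_mat_vec[OF _ _ v(1)], use X Y Z in \<open>auto simp: minus_carrier_mat\<close>)
  also have "(l \<cdot>\<^sub>m X - Y) *\<^sub>v v = (l \<cdot>\<^sub>m X) *\<^sub>v v - Y *\<^sub>v v"
    by (rule minus_mult_distrib_mat_vec[OF _ _ v(1)], use X Y Z in auto)
  also have "(l \<cdot>\<^sub>m X) *\<^sub>v v = l \<cdot>\<^sub>v (X *\<^sub>v v)" by (rule smult_mat_vec[OF X v(1)])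
  also have "(w \<cdot>\<^sub>m Z) *\<^sub>v v = w \<cdot>\<^sub>v (Z *\<^sub>v v)" by (rule smult_mat_vec[OF Z v(1)])
  finally have "(l \<cdot>\<^sub>m X - Y - w \<cdot>\<^sub>m Z) *\<^sub>v v = 0\<^sub>v k" unfolding v(3-5) by (intro eq_vecI, auto)
  then show ?thesis unfolding det_0_iff_vec_prod_zero[OF K] using v(1,2) by blast
qed

theorem theorem5:
  fixes E A B :: "complex mat" and n :: nat
  assumes "E \<in> carrier_mat n n" "A \<in> carrier_mat n n" "B \<in> carrier_mat n n"
    and "E * A = A * E" "E * B = B * E" "A * B = B * A"
  shows "\<exists>U Uinv n1 n2 n3 n4 JE NE2 NE3 NE4 A1 JA NA3 NA4 B1 B2 JB NB4.
     U \<in> carrier_mat n n \<and> Uinv \<in> carrier_mat n n \<and>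
     U * Uinv = 1\<^sub>m n \<and> Uinv * U = 1\<^sub>m n \<and>
     n1 + n2 + n3 + n4 = n \<and>
     JE \<in> carrier_mat n1 n1 \<and> NE2 \<in> carrier_mat n2 n2 \<and> NE3 \<in> carrier_mat n3 n3 \<and> NE4 \<in> carrier_mat n4 n4 \<and>
     A1 \<in> carrier_mat n1 n1 \<and> JA \<in> carrier_mat n2 n2 \<and> NA3 \<in> carrier_mat n3 n3 \<and> NA4 \<in> carrier_mat n4 n4 \<and>
     B1 \<in> carrier_mat n1 n1 \<and> B2 \<in> carrier_mat n2 n2 \<and> JB \<in> carrier_mat n3 n3 \<and> NB4 \<in> carrier_mat n4 n4 \<and>
     U * E * Uinv = block_diag4 JE NE2 NE3 NE4 \<and>
     U * A * Uinv = block_diag4 A1 JA NA3 NA4 \<and>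
     U * B * Uinv = block_diag4 B1 B2 JB NB4 \<and>
     invertible_mat JE \<and> invertible_mat JA \<and> invertible_mat JB \<and>
     nilpotent_mat NE2 \<and> nilpotent_mat NE3 \<and> nilpotent_mat NE4 \<and>
     nilpotent_mat NA3 \<and> nilpotent_mat NA4 \<and> nilpotent_mat NB4 \<and>
     (regular_triple E A B \<longrightarrow> n4 = 0)"
proof -
  note E = assms(1) and A = assms(2) and B = assms(3)
  from split_step[OF assms(1-6)] obtain U1 U1i n1 m JE N A1 A' B1 B' where
    U1: "U1 \<in> carrier_mat n n" and U1i: "U1i \<in> carrier_mat n n" and
    U1inv: "U1 * U1i = 1\<^sub>m n" "U1i * U1 = 1\<^sub>m n" and nm: "n1 + m = n" and
    JE: "JE \<in> carrier_mat n1 n1" and N: "N \<in> carrier_mat m m" and A1: "A1 \<in> carrier_mat n1 n1"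
    and A': "A' \<in> carrier_mat m m" and B1: "B1 \<in> carrier_mat n1 n1" and B': "B' \<in> carrier_mat m m"
    and e1: "U1 * E * U1i = block_diag2 JE N" "U1 * A * U1i = block_diag2 A1 A'" "U1 * B * U1i = block_diag2 B1 B'"
    and dJE: "det JE \<noteq> 0" and nN: "nilpotent_mat N" and c1: "N * A' = A' * N" "N * B' = B' * N" "A' * B' = B' * A'"
    by blast
  from split_step[OF A' N B' c1(1)[symmetric] c1(3) c1(2)] obtain U2 U2i n2 m2 JA NA NE2 N2 B2 B2' where
    U2: "U2 \<in> carrier_mat m m" and U2i: "U2i \<in> carrier_mat m m" and
    U2inv: "U2 * U2i = 1\<^sub>m m" "U2i * U2 = 1\<^sub>m m" and nm2: "n2 + m2 = m" and
    JA: "JA \<in> carrier_mat n2 n2" and NA: "NA \<in> carrier_mat m2 m2" and NE2: "NE2 \<in> carrier_mat n2 n2"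
    and N2: "N2 \<in> carrier_mat m2 m2" and B2: "B2 \<in> carrier_mat n2 n2" and B2': "B2' \<in> carrier_mat m2 m2"
    and e2: "U2 * A' * U2i = block_diag2 JA NA" "U2 * N * U2i = block_diag2 NE2 N2" "U2 * B' * U2i = block_diag2 B2 B2'"
    and dJA: "det JA \<noteq> 0" and nNA: "nilpotent_mat NA" and c2: "NA * N2 = N2 * NA" "NA * B2' = B2' * NA" "N2 * B2' = B2' * N2"
    by blast
  have "nilpotent_mat (block_diag2 NE2 N2)" by (rule nilp_conj[OF U2 U2i U2inv N nN e2(2)])
  from nilpotent_bd2_D[OF NE2 N2 this] have nNE2: "nilpotent_mat NE2" and nN2: "nilpotent_mat N2" by auto
  from split_step[OF B2' N2 NA c2(3)[symmetric] c2(2)[symmetric] c2(1)[symmetric]]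
  obtain U3 U3i n3 n4 JB NB4 NE3 NE4 NA3 NA4 where
    U3: "U3 \<in> carrier_mat m2 m2" and U3i: "U3i \<in> carrier_mat m2 m2" and
    U3inv: "U3 * U3i = 1\<^sub>m m2" "U3i * U3 = 1\<^sub>m m2" and nm3: "n3 + n4 = m2" and
    JB: "JB \<in> carrier_mat n3 n3" and NB4: "NB4 \<in> carrier_mat n4 n4" and NE3: "NE3 \<in> carrier_mat n3 n3"
    and NE4: "NE4 \<in> carrier_mat n4 n4" and NA3: "NA3 \<in> carrier_mat n3 n3" and NA4: "NA4 \<in> carrier_mat n4 n4"
    and e3: "U3 * B2' * U3i = block_diag2 JB NB4" "U3 * N2 * U3i = block_diag2 NE3 NE4" "U3 * NA * U3i = block_diag2 NA3 NA4"
    and dJB: "det JB \<noteq> 0" and nNB4: "nilpotent_mat NB4" and c3: "NB4 * NE4 = NE4 * NB4" "NB4 * NA4 = NA4 * NB4" "NE4 * NA4 = NA4 * NE4"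
    by blast
  have "nilpotent_mat (block_diag2 NE3 NE4)" by (rule nilp_conj[OF U3 U3i U3inv N2 nN2 e3(2)])
  from nilpotent_bd2_D[OF NE3 NE4 this] have nNE3: "nilpotent_mat NE3" and nNE4: "nilpotent_mat NE4" by auto
  have "nilpotent_mat (block_diag2 NA3 NA4)" by (rule nilp_conj[OF U3 U3i U3inv NA nNA e3(3)])
  from nilpotent_bd2_D[OF NA3 NA4 this] have nNA3: "nilpotent_mat NA3" and nNA4: "nilpotent_mat NA4" by auto
  define W3 where "W3 = block_diag2 (1\<^sub>m n2) U3"
  define W3i where "W3i = block_diag2 (1\<^sub>m n2) U3i"
  note x3 = ext_inv[OF U3 U3i U3inv, where a=n2, folded W3_def W3i_def, unfolded nm2]
  define V where "V = W3 * U2"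
  define Vi where "Vi = U2i * W3i"
  note y3 = comp_inv[OF U2 U2i U2inv x3(1-4), folded V_def Vi_def]
  have eV: "V * A' * Vi = block_diag2 JA (block_diag2 NA3 NA4)"
    "V * N * Vi = block_diag2 NE2 (block_diag2 NE3 NE4)"
    "V * B' * Vi = block_diag2 B2 (block_diag2 JB NB4)"
    using y3(5)[OF A'] y3(5)[OF N] y3(5)[OF B'] e2 x3(5)[OF JA NA] x3(5)[OF NE2 N2] x3(5)[OF B2 B2'] e3
    by auto
  define W1 where "W1 = block_diag2 (1\<^sub>m n1) V"
  define W1i where "W1i = block_diag2 (1\<^sub>m n1) Vi"
  note x1 = ext_inv[OF y3(1-4), where a=n1, folded W1_def W1i_def, unfolded nm]
  define U where "U = W1 * U1"
  define Ui where "Ui = U1i * W1i"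
  note y1 = comp_inv[OF U1 U1i U1inv x1(1-4), folded U_def Ui_def]
  have NAm: "block_diag2 NA3 NA4 \<in> carrier_mat m2 m2" using bd2_carrier[OF NA3 NA4] nm3 by simp
  have NEm: "block_diag2 NE3 NE4 \<in> carrier_mat m2 m2" using bd2_carrier[OF NE3 NE4] nm3 by simp
  have JBm: "block_diag2 JB NB4 \<in> carrier_mat m2 m2" using bd2_carrier[OF JB NB4] nm3 by simp
  have NAm': "block_diag2 JA (block_diag2 NA3 NA4) \<in> carrier_mat m m" using bd2_carrier[OF JA NAm] nm2 by simp
  have NEm': "block_diag2 NE2 (block_diag2 NE3 NE4) \<in> carrier_mat m m" using bd2_carrier[OF NE2 NEm] nm2 by simp
  have JBm': "block_diag2 B2 (block_diag2 JB NB4) \<in> carrier_mat m m" using bd2_carrier[OF B2 JBm] nm2 by simp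
  have eU: "U * E * Ui = block_diag4 JE NE2 NE3 NE4"
    "U * A * Ui = block_diag4 A1 JA NA3 NA4"
    "U * B * Ui = block_diag4 B1 B2 JB NB4"
    unfolding block_diag4_def
    using y1(5)[OF E] y1(5)[OF A] y1(5)[OF B] e1 x1(5)[OF JE N] x1(5)[OF A1 A'] x1(5)[OF B1 B'] eV
    by auto
  have sizes: "n1 + n2 + n3 + n4 = n" using nm nm2 nm3 by simp
  have reg: "n4 = 0" if r: "regular_triple E A B"
  proof (rule ccontr)
    assume "n4 \<noteq> 0"
    then have n4: "n4 > 0" by simp
    from r obtain l w where dK: "det (l \<cdot>\<^sub>m E - A - w \<cdot>\<^sub>m B) \<noteq> 0" unfolding regular_triple_def by blast
    have K: "l \<cdot>\<^sub>m E - A - w \<cdot>\<^sub>m B \<in> carrier_mat n n" using E A B by (simp add: minus_carrier_mat)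
    have "det (U * (l \<cdot>\<^sub>m E - A - w \<cdot>\<^sub>m B) * Ui) = det (l \<cdot>\<^sub>m E - A - w \<cdot>\<^sub>m B)"
      by (rule conj_det[OF y1(1,2,3) K])
    also have "U * (l \<cdot>\<^sub>m E - A - w \<cdot>\<^sub>m B) * Ui = l \<cdot>\<^sub>m (U * E * Ui) - U * A * Ui - w \<cdot>\<^sub>m (U * B * Ui)"
      by (rule conj_lin[OF y1(1,2) E A B])
    also have "\<dots> = block_diag2 (l \<cdot>\<^sub>m JE - A1 - w \<cdot>\<^sub>m B1) (block_diag2 (l \<cdot>\<^sub>m NE2 - JA - w \<cdot>\<^sub>m B2)
         (block_diag2 (l \<cdot>\<^sub>m NE3 - NA3 - w \<cdot>\<^sub>m JB) (l \<cdot>\<^sub>m NE4 - NA4 - w \<cdot>\<^sub>m NB4)))"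
      unfolding eU block_diag4_def
      by (simp add: bd2_lin[OF JE A1 B1 NEm' NAm' JBm'] bd2_lin[OF NE2 JA B2 NEm NAm JBm]
          bd2_lin[OF NE3 NA3 JB NE4 NA4 NB4])
    also have "det \<dots> = 0"
    proof -
      have K4: "det (l \<cdot>\<^sub>m NE4 - NA4 - w \<cdot>\<^sub>m NB4) = 0"
        by (rule nil_det0[OF NE4 NA4 NB4 nNE4 nNA4 nNB4 c3(3) c3(1)[symmetric] c3(2)[symmetric] n4])
      have c4: "l \<cdot>\<^sub>m NE4 - NA4 - w \<cdot>\<^sub>m NB4 \<in> carrier_mat n4 n4" using NE4 NA4 NB4 by (simp add: minus_carrier_mat)
      have c3': "l \<cdot>\<^sub>m NE3 - NA3 - w \<cdot>\<^sub>m JB \<in> carrier_mat n3 n3" using NE3 NA3 JB by (simp add: minus_carrier_mat)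
      have c2': "l \<cdot>\<^sub>m NE2 - JA - w \<cdot>\<^sub>m B2 \<in> carrier_mat n2 n2" using NE2 JA B2 by (simp add: minus_carrier_mat)
      have c1': "l \<cdot>\<^sub>m JE - A1 - w \<cdot>\<^sub>m B1 \<in> carrier_mat n1 n1" using JE A1 B1 by (simp add: minus_carrier_mat)
      have d3: "det (block_diag2 (l \<cdot>\<^sub>m NE3 - NA3 - w \<cdot>\<^sub>m JB) (l \<cdot>\<^sub>m NE4 - NA4 - w \<cdot>\<^sub>m NB4)) = 0"
        unfolding bd2_det[OF c3' c4] K4 by simp
      have d2: "det (block_diag2 (l \<cdot>\<^sub>m NE2 - JA - w \<cdot>\<^sub>m B2) (block_diag2 (l \<cdot>\<^sub>m NE3 - NA3 - w \<cdot>\<^sub>m JB) (l \<cdot>\<^sub>m NE4 - NA4 - w \<cdot>\<^sub>m NB4))) = 0"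
        unfolding bd2_det[OF c2' bd2_carrier[OF c3' c4]] d3 by simp
      show ?thesis
        unfolding bd2_det[OF c1' bd2_carrier[OF c2' bd2_carrier[OF c3' c4]]] d2 by simp
    qed
    finally show False using dK by simp
  qed
  show ?thesis
    apply (rule exI[of _ U], rule exI[of _ Ui], rule exI[of _ n1], rule exI[of _ n2], rule exI[of _ n3], rule exI[of _ n4])
    apply (rule exI[of _ JE], rule exI[of _ NE2], rule exI[of _ NE3], rule exI[of _ NE4])
    apply (rule exI[of _ A1], rule exI[of _ JA], rule exI[of _ NA3], rule exI[of _ NA4])
    apply (rule exI[of _ B1], rule exI[of _ B2], rule exI[of _ JB], rule exI[of _ NB4])
    using y1(1-4) sizes JE NE2 NE3 NE4 A1 JA NA3 NA4 B1 B2 JB NB4 eU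
      det_invertible[OF JE dJE] det_invertible[OF JA dJA] det_invertible[OF JB dJB]
      nNE2 nNE3 nNE4 nNA3 nNA4 nNB4 reg
    by blast
qed

end
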